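(* Let $J\ge2$, $\iota_1,\dots,\iota_J\in\{\pm1\}$ and distinct $z_1^*,\dots,z_J^*\in\mathbb{R}^N$. If $\#\{i:\iota_i=+1\}\le1$ or $\#\{i:\iota_i=-1\}\le1$, then the configuration $\{(\iota_1,z_1^* ),\dots,(\iota_J,z_J^* )\}$ is totally non-degenerate. In particular, any degenerate configuration has at least two positive signs and two negative signs, so $J\ge4$.
   Context: $N\ge7$. $A^*_{ij}=\mathbf 1_{i\ne j}\kappa_0\kappa_\infty\frac{\iota_i\iota_j}{|z_i^*-z_j^*|^{N-2}}$ with fixed positive constants $\kappa_0,\kappa_\infty$. A configuration (of size $\ge2$) is non-degenerate if $A^*$ has no nonzero kernel element in $[0,\infty)^J$, degenerate otherwise; it is totally non-degenerate if every sub-configuration $\{(\iota_i,z_i^* ):i\in\mathcal I\}$ with $|\mathcal I|\ge2$ is non-degenerate (with the corresponding submatrix of $A^*$). *)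

theory Defs
  imports "HOL-Analysis.Analysis"
begin

text \<open>Configurations are indexed by 0..<J: signs iota i (in {-1,1}) and points z i in R^N,
  where N = CARD('n).  The interaction matrix A* (zero on the diagonal).\<close>

definition Amat :: "real \<Rightarrow> real \<Rightarrow> (nat \<Rightarrow> real) \<Rightarrow> (nat \<Rightarrow> real ^ 'n) \<Rightarrow> nat \<Rightarrow> nat \<Rightarrow> real" where
  "Amat k0 kinf iota z i j =
     (if i \<noteq> j then k0 * kinf * (iota i * iota j) / (dist (z i) (z j)) ^ (CARD('n) - 2) else 0)"

definition nondegenerate_on :: "real \<Rightarrow> real \<Rightarrow> (nat \<Rightarrow> real) \<Rightarrow> (nat \<Rightarrow> real ^ 'n) \<Rightarrow> nat set \<Rightarrow> bool" where
  "nondegenerate_on k0 kinf iota z I \<longleftrightarrow>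
     \<not> (\<exists>x :: nat \<Rightarrow> real. (\<forall>i\<in>I. x i \<ge> 0) \<and> (\<exists>i\<in>I. x i \<noteq> 0) \<and>
          (\<forall>i\<in>I. (\<Sum>j\<in>I. Amat k0 kinf iota z i j * x j) = 0))"

definition totally_nondegenerate :: "real \<Rightarrow> real \<Rightarrow> (nat \<Rightarrow> real) \<Rightarrow> (nat \<Rightarrow> real ^ 'n) \<Rightarrow> nat \<Rightarrow> bool" where
  "totally_nondegenerate k0 kinf iota z J \<longleftrightarrow>
     (\<forall>I. I \<subseteq> {..<J} \<and> card I \<ge> 2 \<longrightarrow> nondegenerate_on k0 kinf iota z I)"

end

theory Submission
  imports Defs
begin

lemma core:
  fixes z :: "nat \<Rightarrow> real ^ 'n"
  assumes fin: "finite I" and qI: "q \<in> I" and i0I: "i0 \<in> I" and i0q: "i0 \<noteq> q"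
    and sg: "\<forall>j\<in>I. iota j = 1 \<or> iota j = -1"
    and sgs: "\<forall>j\<in>I-{q}. iota j = s" and s: "s = 1 \<or> s = -1"
    and inj: "inj_on z I" and k0: "k0 > 0" and ki: "kinf > 0"
    and xnn: "\<forall>i\<in>I. x i \<ge> 0"
    and ker: "\<forall>i\<in>I. (\<Sum>j\<in>I. Amat k0 kinf iota z i j * x j) = 0"
  shows "\<forall>i\<in>I. x i = 0"
proof -
  define w where "w i j = k0 * kinf / (dist (z i) (z j)) ^ (CARD('n) - 2)" for i j
  have wpos: "w i j > 0" if "i \<in> I" "j \<in> I" "i \<noteq> j" for i j
  proof -
    have "z i \<noteq> z j" using inj that by (meson inj_on_def)
    then have "dist (z i) (z j) > 0" by simp
    then show ?thesis unfolding w_def using k0 ki by simp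
  qed
  have A: "Amat k0 kinf iota z i j = iota i * iota j * w i j" if "i \<noteq> j" for i j
    using that unfolding Amat_def w_def by simp
  have ne: "iota i \<noteq> 0" if "i \<in> I" for i using sg that by force
  have "(\<Sum>j\<in>I. Amat k0 kinf iota z q j * x j) = (\<Sum>j\<in>I-{q}. Amat k0 kinf iota z q j * x j)"
    using fin qI by (simp add: sum.remove Amat_def)
  also have "\<dots> = (\<Sum>j\<in>I-{q}. (iota q * s) * (w q j * x j))"
    by (rule sum.cong) (use sgs A in auto)
  also have "\<dots> = (iota q * s) * (\<Sum>j\<in>I-{q}. w q j * x j)"
    by (simp add: sum_distrib_left)
  finally have "(iota q * s) * (\<Sum>j\<in>I-{q}. w q j * x j) = 0" using ker qI by simp
  moreover have "iota q * s \<noteq> 0" using ne qI s by auto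
  ultimately have S0: "(\<Sum>j\<in>I-{q}. w q j * x j) = 0" by simp
  have nn: "\<forall>j\<in>I-{q}. w q j * x j \<ge> 0"
    using wpos qI xnn by (metis DiffE insertI1 less_eq_real_def mult_nonneg_nonneg)
  have x0: "x j = 0" if "j \<in> I-{q}" for j
  proof -
    have "w q j * x j = 0" using sum_nonneg_eq_0_iff[of "I-{q}" "\<lambda>j. w q j * x j"] fin nn S0 that by auto
    moreover have "w q j > 0" using wpos qI that by auto
    ultimately show ?thesis by simp
  qed
  have "(\<Sum>j\<in>I. Amat k0 kinf iota z i0 j * x j) = Amat k0 kinf iota z i0 q * x q
        + (\<Sum>j\<in>I-{q}. Amat k0 kinf iota z i0 j * x j)"
    using fin qI by (simp add: sum.remove)
  also have "(\<Sum>j\<in>I-{q}. Amat k0 kinf iota z i0 j * x j) = 0"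
    using x0 by simp
  finally have "Amat k0 kinf iota z i0 q * x q = 0" using ker i0I by simp
  moreover have "Amat k0 kinf iota z i0 q \<noteq> 0"
    using A[OF i0q] ne[OF i0I] ne[OF qI] wpos[OF i0I qI i0q] by simp
  ultimately have "x q = 0" by simp
  then show ?thesis using x0 by blast
qed

lemma nondeg_sub:
  fixes z :: "nat \<Rightarrow> real ^ 'n"
  assumes fin: "finite I" and c2: "card I \<ge> 2"
    and sg: "\<forall>j\<in>I. iota j = 1 \<or> iota j = -1" and s: "s = 1 \<or> s = -1"
    and few: "card {i\<in>I. iota i = s} \<le> 1"
    and inj: "inj_on z I" and k0: "k0 > 0" and ki: "kinf > 0"
  shows "nondegenerate_on k0 kinf iota z I"
  unfolding nondegenerate_on_def
proof
  assume "\<exists>x. (\<forall>i\<in>I. 0 \<le> x i) \<and> (\<exists>i\<in>I. x i \<noteq> 0) \<and>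
          (\<forall>i\<in>I. (\<Sum>j\<in>I. Amat k0 kinf iota z i j * x j) = 0)"
  then obtain x where xnn: "\<forall>i\<in>I. 0 \<le> x i" and xne: "\<exists>i\<in>I. x i \<noteq> 0"
    and ker: "\<forall>i\<in>I. (\<Sum>j\<in>I. Amat k0 kinf iota z i j * x j) = 0" by blast
  obtain q where qI: "q \<in> I" and oth: "\<forall>j\<in>I-{q}. iota j = - s"
  proof (cases "{i\<in>I. iota i = s} = {}")
    case True
    from c2 obtain q where "q \<in> I" by (metis card.empty ex_in_conv not_numeral_le_zero)
    moreover have "\<forall>j\<in>I-{q}. iota j = - s" using True sg s by auto
    ultimately show ?thesis using that by blast
  next
    case False
    have "card {i\<in>I. iota i = s} \<noteq> 0" using False fin by simp
    then have "card {i\<in>I. iota i = s} = 1" using few by linarith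
    then obtain q where qs: "{i\<in>I. iota i = s} = {q}" by (rule card_1_singletonE)
    have "q \<in> I" using qs by blast
    moreover have "\<forall>j\<in>I-{q}. iota j = - s"
    proof
      fix j assume j: "j \<in> I-{q}"
      then have "iota j \<noteq> s" using qs by blast
      then show "iota j = - s" using sg s j by auto
    qed
    ultimately have "q \<in> I" "\<forall>j\<in>I-{q}. iota j = - s" by blast+
    then show ?thesis using that by blast
  qed
  obtain i0 where i0I: "i0 \<in> I" and i0q: "i0 \<noteq> q"
  proof -
    have "card (I - {q}) \<ge> 1" using c2 qI fin by simp
    then obtain i0 where "i0 \<in> I - {q}" by (metis card.empty ex_in_conv not_one_le_zero)
    then show ?thesis using that by blast
  qed
  have "\<forall>i\<in>I. x i = 0"
    by (rule core[OF fin qI i0I i0q sg oth _ inj k0 ki xnn ker]) (use s in auto)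
  then show False using xne by blast
qed

theorem lemma4p4:
  fixes k0 kinf :: real and iota :: "nat \<Rightarrow> real" and z :: "nat \<Rightarrow> real ^ 'n" and J :: nat
  assumes "CARD('n) \<ge> 7"
    and "k0 > 0" and "kinf > 0"
    and "J \<ge> 2"
    and "\<forall>i<J. iota i = 1 \<or> iota i = -1"
    and "inj_on z {..<J}"
  shows "(card {i. i < J \<and> iota i = 1} \<le> 1 \<or> card {i. i < J \<and> iota i = -1} \<le> 1
            \<longrightarrow> totally_nondegenerate k0 kinf iota z J)
       \<and> (\<not> nondegenerate_on k0 kinf iota z {..<J}
            \<longrightarrow> card {i. i < J \<and> iota i = 1} \<ge> 2 \<and> card {i. i < J \<and> iota i = -1} \<ge> 2 \<and> J \<ge> 4)"
proof -
  have gen: "nondegenerate_on k0 kinf iota z I"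
    if sub: "I \<subseteq> {..<J}" and c2: "card I \<ge> 2"
      and few: "card {i. i < J \<and> iota i = 1} \<le> 1 \<or> card {i. i < J \<and> iota i = -1} \<le> 1" for I
  proof -
    have fin: "finite I" using sub finite_subset by blast
    have sg: "\<forall>j\<in>I. iota j = 1 \<or> iota j = -1" using sub assms(5) by auto
    have inj: "inj_on z I" using sub assms(6) inj_on_subset by blast
    have mono: "card {i\<in>I. iota i = s} \<le> card {i. i < J \<and> iota i = s}" for s
      by (rule card_mono) (use sub in auto)
    from few show ?thesis
    proof
      assume "card {i. i < J \<and> iota i = 1} \<le> 1"
      then have "card {i\<in>I. iota i = 1} \<le> 1" using mono[of 1] by linarith
      then show ?thesis using nondeg_sub[OF fin c2 sg _ _ inj assms(2,3)] by auto
    next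
      assume "card {i. i < J \<and> iota i = -1} \<le> 1"
      then have "card {i\<in>I. iota i = -1} \<le> 1" using mono[of "-1"] by linarith
      then show ?thesis using nondeg_sub[OF fin c2 sg _ _ inj assms(2,3)] by auto
    qed
  qed
  have P1: "card {i. i < J \<and> iota i = 1} \<le> 1 \<or> card {i. i < J \<and> iota i = -1} \<le> 1
            \<longrightarrow> totally_nondegenerate k0 kinf iota z J"
    unfolding totally_nondegenerate_def using gen by blast
  have P2: "card {i. i < J \<and> iota i = 1} \<ge> 2 \<and> card {i. i < J \<and> iota i = -1} \<ge> 2 \<and> J \<ge> 4"
    if nd: "\<not> nondegenerate_on k0 kinf iota z {..<J}"
  proof -
    have a: "card {i. i < J \<and> iota i = 1} \<ge> 2" "card {i. i < J \<and> iota i = -1} \<ge> 2"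
      proof -
      have "\<not> (card {i. i < J \<and> iota i = 1} \<le> 1 \<or> card {i. i < J \<and> iota i = -1} \<le> 1)"
        using gen[of "{..<J}"] nd assms(4) by auto
      then show "card {i. i < J \<and> iota i = 1} \<ge> 2" "card {i. i < J \<and> iota i = -1} \<ge> 2"
        by linarith+
    qed
    have "card {i. i < J \<and> iota i = 1} + card {i. i < J \<and> iota i = -1}
          = card ({i. i < J \<and> iota i = 1} \<union> {i. i < J \<and> iota i = -1})"
      by (rule card_Un_disjoint[symmetric]) auto
    also have "\<dots> \<le> card {..<J}" by (rule card_mono) auto
    finally have "J \<ge> 4" using a by simp
    then show ?thesis using a by blast
  qed
  show ?thesis using P1 P2 by blast
qed

end
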